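(* Let $f$ be a homeomorphism of a compact metric space with the shadowing property such that $f|_{\Omega(f)}$ is expansive. Then $f$ has the L-shadowing property.
   Context: Shadowing: for every $\varepsilon>0$ there is $\delta>0$ such that for every sequence $(x_k)_{k\in\mathbb{Z}}$ with $d(f(x_k),x_{k+1})<\delta$ for all $k$ there is $y$ with $d(f^k(y),x_k)<\varepsilon$ for all $k\in\mathbb{Z}$. L-shadowing: for every $\varepsilon>0$ there is $\delta>0$ such that every sequence $(x_k)_{k\in\mathbb{Z}}$ with $d(f(x_k),x_{k+1})\le\delta$ for all $k$ and $d(f(x_k),x_{k+1})\to0$ as $|k|\to\infty$ admits $z$ with $d(f^k(z),x_k)\le\varepsilon$ for all $k$ and $d(f^k(z),x_k)\to0$ as $|k|\to\infty$. $\Omega(f)$ is the non-wandering set. $f|_{\Omega(f)}$ is expansive if there is $c>0$ such that for all $x\in\Omega(f)$, the only $y\in\Omega(f)$ with $d(f^n(x),f^n(y))\le c$ for all $n\in\mathbb{Z}$ is $y=x$. *)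

theory Defs
  imports "HOL-Analysis.Analysis"
begin

definition iter_int :: "('a \<Rightarrow> 'a) \<Rightarrow> int \<Rightarrow> 'a \<Rightarrow> 'a" where
  "iter_int f k = (if k \<ge> 0 then f ^^ nat k else (inv f) ^^ nat (- k))"

definition shadowing :: "('a::metric_space \<Rightarrow> 'a) \<Rightarrow> bool" where
  "shadowing f \<longleftrightarrow> (\<forall>\<epsilon>>0. \<exists>\<delta>>0. \<forall>x :: int \<Rightarrow> 'a.
     (\<forall>k. dist (f (x k)) (x (k + 1)) < \<delta>) \<longrightarrow>
     (\<exists>y. \<forall>k. dist (iter_int f k y) (x k) < \<epsilon>))"

text \<open>L-shadowing property.  "as |k| \<rightarrow> \<infinity>" is rendered as the limit along the
  cofinite filter on int, i.e. both k \<rightarrow> +\<infinity> and k \<rightarrow> -\<infinity>.\<close>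
definition L_shadowing :: "('a::metric_space \<Rightarrow> 'a) \<Rightarrow> bool" where
  "L_shadowing f \<longleftrightarrow> (\<forall>\<epsilon>>0. \<exists>\<delta>>0. \<forall>x :: int \<Rightarrow> 'a.
     (\<forall>k. dist (f (x k)) (x (k + 1)) \<le> \<delta>) \<and>
     ((\<lambda>k. dist (f (x k)) (x (k + 1))) \<longlongrightarrow> 0) cofinite \<longrightarrow>
     (\<exists>z. (\<forall>k. dist (iter_int f k z) (x k) \<le> \<epsilon>) \<and>
          ((\<lambda>k. dist (iter_int f k z) (x k)) \<longlongrightarrow> 0) cofinite))"

definition nonwandering :: "('a::topological_space \<Rightarrow> 'a) \<Rightarrow> 'a set" where
  "nonwandering f = {x. \<forall>U. open U \<and> x \<in> U \<longrightarrow> (\<exists>n::nat. n \<ge> 1 \<and> (f ^^ n) ` U \<inter> U \<noteq> {})}"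

definition expansive_on :: "('a::metric_space \<Rightarrow> 'a) \<Rightarrow> 'a set \<Rightarrow> bool" where
  "expansive_on f S \<longleftrightarrow> (\<exists>c>0. \<forall>x\<in>S. \<forall>y\<in>S.
     (\<forall>n::int. dist (iter_int f n x) (iter_int f n y) \<le> c) \<longrightarrow> y = x)"

end

theory Submission imports Defs begin

lemma iter_int_nat: "iter_int f (int n) = f ^^ n"
  by (simp add: iter_int_def)

lemma iter_int_0[simp]: "iter_int f 0 x = x"
  by (simp add: iter_int_def)

lemma iter_int_succ:
  assumes "bij f" shows "iter_int f (n+1) x = f (iter_int f n x)"
proof (cases "n \<ge> 0")
  case True
  then have "nat (n+1) = Suc (nat n)" by simp
  then show ?thesis using True by (simp add: iter_int_def)
next
  case False
  show ?thesis
  proof (cases "n = -1")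
    case True
    then show ?thesis using assms by (simp add: iter_int_def bij_is_surj surj_f_inv_f)
  next
    case F2: False
    then have "nat (-n) = Suc (nat (-(n+1)))" using False by simp
    then show ?thesis using False F2 assms by (simp add: iter_int_def bij_is_surj surj_f_inv_f)
  qed
qed

lemma iter_int_pred:
  assumes "bij f" shows "iter_int f (n - 1) x = inv f (iter_int f n x)"
  using iter_int_succ[OF assms, of "n-1" x] assms
  by (simp add: bij_is_inj)

lemma iter_int_add:
  assumes "bij f" shows "iter_int f (m + n) x = iter_int f m (iter_int f n x)"
proof (induction m rule: int_induct[of _ 0])
  case base
  then show ?case by simp
next
  case (step1 i)
  have "iter_int f (i + 1 + n) x = f (iter_int f (i + n) x)"
    using iter_int_succ[OF assms, of "i+n"] by (simp add: algebra_simps)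
  then show ?case using step1 iter_int_succ[OF assms] by simp
next
  case (step2 i)
  have "iter_int f (i - 1 + n) x = inv f (iter_int f (i + n) x)"
    using iter_int_pred[OF assms, of "i+n"] by (simp add: algebra_simps)
  then show ?case using step2 iter_int_pred[OF assms] by simp
qed

lemma cont_funpow: fixes f :: "'a::topological_space \<Rightarrow> 'a" shows "continuous_on UNIV f \<Longrightarrow> continuous_on UNIV (f ^^ n)"
proof (induction n)
  case 0 have "(f^^0) = (\<lambda>x. x)" by (rule ext) simp then show ?case by (simp add: continuous_on_id)
next
  case (Suc n)
  then have "continuous_on UNIV (f \<circ> (f ^^ n))"
    by (intro continuous_on_compose) (auto intro: continuous_on_subset)
  then show ?case by (simp add: funpow_Suc_right[symmetric] funpow.simps)
qed

lemma homeo_facts: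
  assumes "homeomorphism UNIV UNIV f g"
  shows "bij f" "inv f = g" "continuous_on UNIV f" "continuous_on UNIV g"
proof -
  have fg: "\<And>x. g (f x) = x" "\<And>y. f (g y) = y" using assms by (auto simp: homeomorphism_def)
  show "bij f" by (metis bijI' fg)
  show "inv f = g" by (rule ext) (metis fg inv_f_f injI)
  show "continuous_on UNIV f" "continuous_on UNIV g" using assms by (auto simp: homeomorphism_def)
qed

lemma cont_iter_int:
  assumes "homeomorphism UNIV UNIV f g"
  shows "continuous_on UNIV (iter_int f n)"
  using homeo_facts[OF assms] by (simp add: iter_int_def cont_funpow)


lemma nw_limit:
  fixes f :: "'a::metric_space \<Rightarrow> 'a"
  assumes bij: "bij f" and s: "s = 1 \<or> s = -1" and r: "strict_mono r"
    and lim: "(\<lambda>i. iter_int f (s * int (r i)) a) \<longlonglongrightarrow> p"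
  shows "p \<in> nonwandering f"
  unfolding nonwandering_def
proof (intro CollectI allI impI)
  fix U :: "'a set" assume U: "open U \<and> p \<in> U"
  then have "eventually (\<lambda>i. iter_int f (s * int (r i)) a \<in> U) sequentially"
    using lim by (auto simp: tendsto_def)
  then obtain N where N: "\<And>i. i \<ge> N \<Longrightarrow> iter_int f (s * int (r i)) a \<in> U"
    by (auto simp: eventually_sequentially)
  have lt: "r N < r (Suc N)" using r by (simp add: strict_mono_def)
  define n where "n = r (Suc N) - r N"
  have n1: "n \<ge> 1" using lt by (simp add: n_def)
  have nn: "int n = int (r (Suc N)) - int (r N)" using lt by (simp add: n_def of_nat_diff)
  have A: "iter_int f (s * int (r N)) a \<in> U" and B: "iter_int f (s * int (r (Suc N))) a \<in> U"
    using N by auto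
  show "\<exists>n::nat. n \<ge> 1 \<and> (f ^^ n) ` U \<inter> U \<noteq> {}"
  proof (rule exI[of _ n], intro conjI n1)
    from s show "(f ^^ n) ` U \<inter> U \<noteq> {}"
    proof
      assume s1: "s = 1"
      have "(f ^^ n) (iter_int f (s * int (r N)) a) = iter_int f (int n) (iter_int f (s * int (r N)) a)"
        by (simp only: iter_int_nat)
      also have "\<dots> = iter_int f (int n + s * int (r N)) a" by (rule iter_int_add[OF bij, symmetric])
      also have "int n + s * int (r N) = s * int (r (Suc N))" using s1 nn by simp
      finally have eq: "(f ^^ n) (iter_int f (s * int (r N)) a) = iter_int f (s * int (r (Suc N))) a" .
      have "iter_int f (s * int (r (Suc N))) a \<in> (f ^^ n) ` U"
        using A unfolding eq[symmetric] by (rule imageI)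
      then have "iter_int f (s * int (r (Suc N))) a \<in> (f ^^ n) ` U \<inter> U" using B by (rule IntI)
      then show ?thesis by (metis empty_iff)
    next
      assume s1: "s = -1"
      have "(f ^^ n) (iter_int f (s * int (r (Suc N))) a) = iter_int f (int n) (iter_int f (s * int (r (Suc N))) a)"
        by (simp only: iter_int_nat)
      also have "\<dots> = iter_int f (int n + s * int (r (Suc N))) a" by (rule iter_int_add[OF bij, symmetric])
      also have "int n + s * int (r (Suc N)) = s * int (r N)" using s1 nn by simp
      finally have eq: "(f ^^ n) (iter_int f (s * int (r (Suc N))) a) = iter_int f (s * int (r N)) a" .
      have "iter_int f (s * int (r N)) a \<in> (f ^^ n) ` U"
        using B unfolding eq[symmetric] by (rule imageI)
      then have "iter_int f (s * int (r N)) a \<in> (f ^^ n) ` U \<inter> U" using A by (rule IntI)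
      then show ?thesis by (metis empty_iff)
    qed
  qed
qed

lemma asym:
  fixes f :: "'a::metric_space \<Rightarrow> 'a"
  assumes cpt: "compact (UNIV::'a set)" and hom: "homeomorphism UNIV UNIV f g"
    and c: "\<forall>x\<in>nonwandering f. \<forall>y\<in>nonwandering f.
       (\<forall>n::int. dist (iter_int f n x) (iter_int f n y) \<le> c) \<longrightarrow> y = x"
    and s: "s = 1 \<or> s = -1"
    and bd: "\<forall>j::nat. dist (iter_int f (s * int j) a) (iter_int f (s * int j) b) \<le> c"
  shows "(\<lambda>j. dist (iter_int f (s * int j) a) (iter_int f (s * int j) b)) \<longlonglongrightarrow> 0"
proof (rule ccontr)
  define X where "X = (\<lambda>j. dist (iter_int f (s * int j) a) (iter_int f (s * int j) b))"
  have bij: "bij f" using homeo_facts[OF hom] by simp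
  assume "\<not> ?thesis"
  then have "\<not> X \<longlonglongrightarrow> 0" by (simp add: X_def)
  then obtain \<eta> where \<eta>: "\<eta> > 0" "\<forall>N. \<exists>j\<ge>N. \<not> X j < \<eta>"
    unfolding LIMSEQ_iff by (auto simp: X_def)
  have inf: "infinite {j. \<eta> \<le> X j}"
    unfolding infinite_nat_iff_unbounded_le using \<eta>(2) by (auto simp: not_less)
  obtain r0 :: "nat \<Rightarrow> nat" where r0: "strict_mono r0" "\<And>i. r0 i \<in> {j. \<eta> \<le> X j}"
    using infinite_enumerate[OF inf] by blast
  have "compact (UNIV :: ('a \<times> 'a) set)"
    using compact_Times[OF cpt cpt] by simp
  then obtain l r1 where r1: "strict_mono r1"
    and lim: "((\<lambda>i. (iter_int f (s * int (r0 i)) a, iter_int f (s * int (r0 i)) b)) \<circ> r1) \<longlonglongrightarrow> l"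
    using seq_compactE[OF compact_imp_seq_compact, of UNIV "(\<lambda>i. (iter_int f (s * int (r0 i)) a, iter_int f (s * int (r0 i)) b))"]
    by blast
  define r where "r = r0 \<circ> r1"
  have r: "strict_mono r" using r0(1) r1 by (simp add: r_def strict_mono_o)
  define p where "p = fst l"
  define q where "q = snd l"
  have P: "(\<lambda>i. iter_int f (s * int (r i)) a) \<longlonglongrightarrow> p"
    using tendsto_fst[OF lim] by (simp add: p_def r_def o_def)
  have Q: "(\<lambda>i. iter_int f (s * int (r i)) b) \<longlonglongrightarrow> q"
    using tendsto_snd[OF lim] by (simp add: q_def r_def o_def)
  have "\<eta> \<le> dist p q"
  proof (rule LIMSEQ_le_const[OF tendsto_dist[OF P Q]])
    show "\<exists>N. \<forall>n\<ge>N. \<eta> \<le> dist (iter_int f (s * int (r n)) a) (iter_int f (s * int (r n)) b)"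
      using r0(2) by (auto simp: r_def X_def)
  qed
  have pn: "p \<in> nonwandering f" by (rule nw_limit[OF bij s r P])
  have qn: "q \<in> nonwandering f" by (rule nw_limit[OF bij s r Q])
  have "\<forall>n::int. dist (iter_int f n p) (iter_int f n q) \<le> c"
  proof
    fix n :: int
    have ct: "isCont (iter_int f n) x" for x
      using cont_iter_int[OF hom, of n] continuous_on_eq_continuous_at open_UNIV by blast
    have L: "(\<lambda>i. dist (iter_int f n (iter_int f (s * int (r i)) a)) (iter_int f n (iter_int f (s * int (r i)) b)))
        \<longlonglongrightarrow> dist (iter_int f n p) (iter_int f n q)"
      by (intro tendsto_dist isCont_tendsto_compose[OF ct] P Q)
    show "dist (iter_int f n p) (iter_int f n q) \<le> c"
    proof (rule LIMSEQ_le_const2[OF L], rule exI[of _ "nat \<bar>n\<bar>"], intro allI impI)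
      fix i assume i: "nat \<bar>n\<bar> \<le> i"
      have ri: "i \<le> r i" using r by (rule seq_suble)
      have ge: "int (r i) \<ge> \<bar>n\<bar>" using i ri by linarith
      obtain m :: nat where m: "n + s * int (r i) = s * int m"
      proof (cases "s = 1")
        case True
        then show ?thesis using that[of "nat (int (r i) + n)"] ge by simp
      next
        case False
        then have "s = -1" using s by simp
        then show ?thesis using that[of "nat (int (r i) - n)"] ge by simp
      qed
      show "dist (iter_int f n (iter_int f (s * int (r i)) a)) (iter_int f n (iter_int f (s * int (r i)) b)) \<le> c"
        using bd[rule_format, of m] by (simp only: iter_int_add[OF bij, symmetric] m)
    qed
  qed
  then have "q = p" using c pn qn by blast
  then show False using \<open>\<eta> \<le> dist p q\<close> \<eta>(1) by simp
qed


lemma tail: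
  fixes f :: "'a::metric_space \<Rightarrow> 'a" and x :: "int \<Rightarrow> 'a"
  assumes cpt: "compact (UNIV::'a set)" and hom: "homeomorphism UNIV UNIV f g"
    and cexp: "\<forall>x\<in>nonwandering f. \<forall>y\<in>nonwandering f.
       (\<forall>n::int. dist (iter_int f n x) (iter_int f n y) \<le> c) \<longrightarrow> y = x"
    and sh: "shadowing f"
    and s: "s = 1 \<or> s = -1"
    and e1: "\<epsilon>1 \<le> c / 2"
    and y: "\<forall>k. dist (iter_int f k y) (x k) < \<epsilon>1"
    and lim: "((\<lambda>k. dist (f (x k)) (x (k + 1))) \<longlongrightarrow> 0) cofinite"
    and \<eta>: "\<eta> > 0"
  shows "\<exists>N::nat. \<forall>j\<ge>N. dist (iter_int f (s * int j) y) (x (s * int j)) < \<eta>"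
proof -
  have bij: "bij f" using homeo_facts[OF hom] by simp
  have ss: "s * s = 1" using s by auto
  have e1pos: "\<epsilon>1 > 0" using y[rule_format, of 0] zero_le_dist[of "iter_int f 0 y" "x 0"] by linarith
  define \<eta>' where "\<eta>' = min \<eta> \<epsilon>1"
  have \<eta>'pos: "\<eta>' > 0" using \<eta> e1pos by (simp add: \<eta>'_def)
  obtain \<delta>' where \<delta>': "\<delta>' > 0"
    and sh\<delta>: "\<And>x :: int \<Rightarrow> 'a. (\<forall>k. dist (f (x k)) (x (k + 1)) < \<delta>') \<Longrightarrow>
        (\<exists>y. \<forall>k. dist (iter_int f k y) (x k) < \<eta>' / 2)"
    using sh \<eta>'pos unfolding shadowing_def by (meson half_gt_zero)
  have "eventually (\<lambda>k. dist (f (x k)) (x (k + 1)) < \<delta>') cofinite"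
    using order_tendstoD(2)[OF lim \<delta>'] .
  then have "finite {k. \<not> dist (f (x k)) (x (k + 1)) < \<delta>'}"
    by (simp add: eventually_cofinite)
  then obtain B where B: "abs ` {k. \<not> dist (f (x k)) (x (k + 1)) < \<delta>'} \<subseteq> {..B}"
    unfolding finite_int_iff_bounded_le by blast
  define M where "M = nat B + 1"
  have errM: "dist (f (x k)) (x (k + 1)) < \<delta>'" if "\<bar>k\<bar> \<ge> int M" for k
  proof (rule ccontr)
    assume "\<not> ?thesis"
    then have "\<bar>k\<bar> \<le> B" using B by auto
    then show False using that by (auto simp: M_def split: if_splits)
  qed
  define x' where "x' k = (if s * k \<ge> int M then x k else iter_int f (k - s * int M) (x (s * int M)))" for k
  have x'err: "dist (f (x' k)) (x' (k + 1)) < \<delta>'" for k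
  proof (cases "s * k \<ge> int M")
    case True
    note T = True
    show ?thesis
    proof (cases "s * (k + 1) \<ge> int M")
      case True
      have "\<bar>k\<bar> \<ge> int M" using T s by auto
      then show ?thesis using T True errM by (simp add: x'_def)
    next
      case False
      then have "s = -1" "k = - int M" using T s by auto
      then have "x' (k + 1) = f (x' k)"
        using T False by (simp add: x'_def iter_int_succ[OF bij, of 0, simplified])
      then show ?thesis using \<delta>' by simp
    qed
  next
    case False
    note F = False
    have fx: "f (x' k) = iter_int f (k + 1 - s * int M) (x (s * int M))"
      using F iter_int_succ[OF bij, of "k - s * int M"] by (simp add: x'_def algebra_simps)
    show ?thesis
    proof (cases "s * (k + 1) \<ge> int M")
      case True
      then have "s = 1" "k + 1 = int M" using F s by auto
      then have "x' (k + 1) = f (x' k)" using fx by (simp add: x'_def)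
      then show ?thesis using \<delta>' by simp
    next
      case False
      then have "x' (k + 1) = f (x' k)" using fx by (simp add: x'_def)
      then show ?thesis using \<delta>' by simp
    qed
  qed
  obtain w where w: "\<forall>k. dist (iter_int f k w) (x' k) < \<eta>' / 2"
    using sh\<delta>[of x'] x'err by blast
  define a where "a = iter_int f (s * int M) y"
  define b where "b = iter_int f (s * int M) w"
  have shift: "iter_int f (s * int j) (iter_int f (s * int M) z) = iter_int f (s * int (j + M)) z" for j z
    by (simp add: iter_int_add[OF bij, symmetric] algebra_simps)
  have x'x: "x' (s * int j) = x (s * int j)" if "j \<ge> M" for j
  proof -
    have "s * (s * int j) = int j" using ss by (simp add: mult.assoc[symmetric])
    moreover have "int j \<ge> int M" using that by simp
    ultimately have "s * (s * int j) \<ge> int M" by linarith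
    then show ?thesis unfolding x'_def by (simp only: if_True)
  qed
  have bd: "\<forall>j::nat. dist (iter_int f (s * int j) a) (iter_int f (s * int j) b) \<le> c"
  proof
    fix j :: nat
    let ?k = "s * int (j + M)"
    have "dist (iter_int f ?k y) (iter_int f ?k w) \<le> dist (iter_int f ?k y) (x ?k) + dist (x ?k) (iter_int f ?k w)"
      by (rule dist_triangle)
    also have "dist (x ?k) (iter_int f ?k w) < \<eta>' / 2"
      using w[rule_format, of ?k] x'x[of "j + M"] by (simp add: dist_commute)
    finally have d1: "dist (iter_int f ?k y) (iter_int f ?k w) < \<epsilon>1 + \<eta>' / 2"
      using y[rule_format, of ?k] by linarith
    have eta: "\<eta>' \<le> \<epsilon>1" by (simp add: \<eta>'_def)
    show "dist (iter_int f (s * int j) a) (iter_int f (s * int j) b) \<le> c"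
    proof -
      have "dist (iter_int f (s * int j) a) (iter_int f (s * int j) b) = dist (iter_int f ?k y) (iter_int f ?k w)"
        by (simp only: a_def b_def shift)
      then show ?thesis using d1 eta e1 e1pos by linarith
    qed
  qed
  have "(\<lambda>j. dist (iter_int f (s * int j) a) (iter_int f (s * int j) b)) \<longlonglongrightarrow> 0"
    by (rule asym[OF cpt hom cexp s bd])
  from order_tendstoD(2)[OF this, of "\<eta>' / 2"] \<eta>'pos
  obtain J where J: "\<And>j. j \<ge> J \<Longrightarrow> dist (iter_int f (s * int j) a) (iter_int f (s * int j) b) < \<eta>' / 2"
    by (auto simp: eventually_sequentially)
  show ?thesis
  proof (rule exI[of _ "J + M"], intro allI impI)
    fix j assume j: "J + M \<le> j"
    define i where "i = j - M"
    have ji: "j = i + M" and iJ: "i \<ge> J" using j by (auto simp: i_def)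
    have "dist (iter_int f (s * int j) y) (x (s * int j)) \<le>
        dist (iter_int f (s * int j) y) (iter_int f (s * int j) w) + dist (iter_int f (s * int j) w) (x (s * int j))"
      by (rule dist_triangle)
    also have "dist (iter_int f (s * int j) y) (iter_int f (s * int j) w) < \<eta>' / 2"
      using J[OF iJ] by (simp add: a_def b_def shift ji)
    also have "dist (iter_int f (s * int j) w) (x (s * int j)) < \<eta>' / 2"
      using w[rule_format, of "s * int j"] x'x[of j] j by simp
    finally show "dist (iter_int f (s * int j) y) (x (s * int j)) < \<eta>"
      using \<eta>'_def by linarith
  qed
qed


theorem mainTheorem13:
  fixes f :: "'a::metric_space \<Rightarrow> 'a"
  assumes "compact (UNIV :: 'a set)"
    and "homeomorphism UNIV UNIV f g"
    and "shadowing f"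
    and "expansive_on f (nonwandering f)"
  shows "L_shadowing f"
proof -
  obtain c where cpos: "c > 0" and cexp: "\<forall>x\<in>nonwandering f. \<forall>y\<in>nonwandering f.
       (\<forall>n::int. dist (iter_int f n x) (iter_int f n y) \<le> c) \<longrightarrow> y = x"
    using assms(4) unfolding expansive_on_def by blast
  show ?thesis unfolding L_shadowing_def
  proof (intro allI impI)
    fix \<epsilon> :: real assume \<epsilon>: "\<epsilon> > 0"
    define \<epsilon>1 where "\<epsilon>1 = min \<epsilon> (c / 2)"
    have e1pos: "\<epsilon>1 > 0" using \<epsilon> cpos by (simp add: \<epsilon>1_def)
    obtain \<delta>1 where \<delta>1: "\<delta>1 > 0"
      and shP: "\<And>x :: int \<Rightarrow> 'a. (\<forall>k. dist (f (x k)) (x (k + 1)) < \<delta>1) \<Longrightarrow>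
        (\<exists>y. \<forall>k. dist (iter_int f k y) (x k) < \<epsilon>1)"
      using assms(3) e1pos unfolding shadowing_def by meson
    show "\<exists>\<delta>>0. \<forall>x. (\<forall>k. dist (f (x k)) (x (k + 1)) \<le> \<delta>) \<and>
            ((\<lambda>k. dist (f (x k)) (x (k + 1))) \<longlongrightarrow> 0) cofinite \<longrightarrow>
            (\<exists>z. (\<forall>k. dist (iter_int f k z) (x k) \<le> \<epsilon>) \<and>
                 ((\<lambda>k. dist (iter_int f k z) (x k)) \<longlongrightarrow> 0) cofinite)"
    proof (intro exI[of _ "\<delta>1 / 2"] conjI allI impI)
      show "\<delta>1 / 2 > 0" using \<delta>1 by simp
      fix x :: "int \<Rightarrow> 'a"
      assume H: "(\<forall>k. dist (f (x k)) (x (k + 1)) \<le> \<delta>1 / 2) \<and>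
            ((\<lambda>k. dist (f (x k)) (x (k + 1))) \<longlongrightarrow> 0) cofinite"
      have "\<forall>k. dist (f (x k)) (x (k + 1)) < \<delta>1"
      proof
        fix k show "dist (f (x k)) (x (k + 1)) < \<delta>1"
          using conjunct1[OF H, rule_format, of k] \<delta>1 by linarith
      qed
      then obtain y where y: "\<forall>k. dist (iter_int f k y) (x k) < \<epsilon>1" using shP by blast
      have e1c: "\<epsilon>1 \<le> c / 2" by (simp add: \<epsilon>1_def)
      show "\<exists>z. (\<forall>k. dist (iter_int f k z) (x k) \<le> \<epsilon>) \<and>
                 ((\<lambda>k. dist (iter_int f k z) (x k)) \<longlongrightarrow> 0) cofinite"
      proof (intro exI[of _ y] conjI allI)
        fix k show "dist (iter_int f k y) (x k) \<le> \<epsilon>"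
          using y[rule_format, of k] by (simp add: \<epsilon>1_def)
      next
        show "((\<lambda>k. dist (iter_int f k y) (x k)) \<longlongrightarrow> 0) cofinite"
        proof (rule order_tendstoI)
          fix a :: real assume "a < 0"
          then show "eventually (\<lambda>k. a < dist (iter_int f k y) (x k)) cofinite"
            by (intro always_eventually allI) (simp add: less_le_trans[OF _ zero_le_dist])
        next
          fix \<eta> :: real assume \<eta>: "0 < \<eta>"
          obtain N1 where N1: "\<forall>j\<ge>N1. dist (iter_int f (1 * int j) y) (x (1 * int j)) < \<eta>"
            using tail[OF assms(1,2) cexp assms(3) _ e1c y conjunct2[OF H] \<eta>, of 1] by blast
          obtain N2 where N2: "\<forall>j\<ge>N2. dist (iter_int f (-1 * int j) y) (x (-1 * int j)) < \<eta>"
            using tail[OF assms(1,2) cexp assms(3) _ e1c y conjunct2[OF H] \<eta>, of "-1"] by blast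
          have "{k. \<not> dist (iter_int f k y) (x k) < \<eta>} \<subseteq> {- int N2 .. int N1}"
          proof
            fix k assume k: "k \<in> {k. \<not> dist (iter_int f k y) (x k) < \<eta>}"
            have "\<not> k \<ge> int N1"
            proof
              assume "k \<ge> int N1"
              then have a1: "nat k \<ge> N1" and a2: "int (nat k) = k" by auto
              have "dist (iter_int f (1 * int (nat k)) y) (x (1 * int (nat k))) < \<eta>"
                using N1 a1 by blast
              then show False using k a2 by simp
            qed
            moreover have "\<not> k \<le> - int N2"
            proof
              assume "k \<le> - int N2"
              then have a1: "nat (-k) \<ge> N2" and a2: "-1 * int (nat (-k)) = k" by auto
              have "dist (iter_int f (-1 * int (nat (-k))) y) (x (-1 * int (nat (-k)))) < \<eta>"
                using N2 a1 by blast
              then show False using k a2 by simp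
            qed
            ultimately show "k \<in> {- int N2 .. int N1}" by simp
          qed
          then have "finite {k. \<not> dist (iter_int f k y) (x k) < \<eta>}"
            by (rule finite_subset) simp
          then show "eventually (\<lambda>k. dist (iter_int f k y) (x k) < \<eta>) cofinite"
            by (simp add: eventually_cofinite)
        qed
      qed
    qed
  qed
qed

end
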